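(* Let $\mathfrak g$ be a finite-dimensional Lie algebra over a field $\mathbb K$ of characteristic zero and $\mathfrak h\subset\mathfrak g$ a commutative ideal. Let $\Psi:\mathfrak h^*\to\mathfrak g$ be a polynomial map with $\Psi(h)\in\mathrm{St}(h)$ for all $h\in\mathfrak h^*$, and set $f_\Psi(x)=\langle x,\Psi(\pi(x))\rangle$. Then $f_\Psi\in\operatorname{Ann}(\mathfrak h)$. Moreover, the polynomial maps with this property form a Lie algebra under $[\Psi_1,\Psi_2](h)=[\Psi_1(h),\Psi_2(h)]$, and $\Psi\mapsto f_\Psi$ is a Lie algebra homomorphism into $S(\mathfrak g)$: $\{f_{\Psi_1},f_{\Psi_2}\}=f_{[\Psi_1,\Psi_2]}$.
   Context: $\pi:\mathfrak g^*\to\mathfrak h^*$ is restriction. For $h\in\mathfrak h^*$, $\mathrm{St}(h)=\{\xi\in\mathfrak g\mid\langle h,[\xi,\eta]\rangle=0\ \forall\eta\in\mathfrak h\}$. $S(\mathfrak g)$ is the polynomial algebra on $\mathfrak g^*$ with Lie–Poisson bracket $\{f,g\}(x)=\langle x,[df(x),dg(x)]\rangle$, and $\operatorname{Ann}(\mathfrak h)=\{f\in S(\mathfrak g)\mid\{f,\eta\}=0\ \forall\eta\in\mathfrak h\}$. *)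

theory Defs
  imports "HOL-Computational_Algebra.Polynomial"
begin

text \<open>The Lie algebra g is modelled as K^I (functions 'i => 'k, 'i finite) with a
 bilinear bracket br; its dual g* is identified with K^I via the standard pairing.\<close>

definition pair :: "('i::finite \<Rightarrow> 'k::comm_ring_1) \<Rightarrow> ('i \<Rightarrow> 'k) \<Rightarrow> 'k" where
  "pair x \<xi> = (\<Sum>i\<in>UNIV. x i * \<xi> i)"

definition lie_algebra :: "(('i::finite \<Rightarrow> 'k::field) \<Rightarrow> ('i \<Rightarrow> 'k) \<Rightarrow> ('i \<Rightarrow> 'k)) \<Rightarrow> bool" where
  "lie_algebra br \<longleftrightarrow>
     (\<forall>a b x y z. br (\<lambda>i. a * x i + b * y i) z = (\<lambda>i. a * br x z i + b * br y z i)) \<and>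
     (\<forall>a b x y z. br z (\<lambda>i. a * x i + b * y i) = (\<lambda>i. a * br z x i + b * br z y i)) \<and>
     (\<forall>x. br x x = (\<lambda>_. 0)) \<and>
     (\<forall>x y z. (\<lambda>i. br x (br y z) i + br y (br z x) i + br z (br x y) i) = (\<lambda>_. 0))"

definition subspace_of :: "('i \<Rightarrow> 'k::field) set \<Rightarrow> bool" where
  "subspace_of H \<longleftrightarrow> (\<lambda>_. 0) \<in> H \<and>
     (\<forall>u\<in>H. \<forall>v\<in>H. (\<lambda>i. u i + v i) \<in> H) \<and> (\<forall>a. \<forall>u\<in>H. (\<lambda>i. a * u i) \<in> H)"

definition comm_ideal :: "(('i \<Rightarrow> 'k::field) \<Rightarrow> ('i \<Rightarrow> 'k) \<Rightarrow> ('i \<Rightarrow> 'k)) \<Rightarrow> ('i \<Rightarrow> 'k) set \<Rightarrow> bool" where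
  "comm_ideal br H \<longleftrightarrow> subspace_of H \<and> (\<forall>\<xi> \<eta>. \<eta> \<in> H \<longrightarrow> br \<xi> \<eta> \<in> H) \<and>
     (\<forall>\<eta>1\<in>H. \<forall>\<eta>2\<in>H. br \<eta>1 \<eta>2 = (\<lambda>_. 0))"

text \<open>h* : linear functionals on H (extensional: zero outside H).\<close>
definition hdual :: "('i \<Rightarrow> 'k::field) set \<Rightarrow> (('i \<Rightarrow> 'k) \<Rightarrow> 'k) set" where
  "hdual H = {\<phi>. (\<forall>u\<in>H. \<forall>v\<in>H. \<forall>a b. \<phi> (\<lambda>i. a * u i + b * v i) = a * \<phi> u + b * \<phi> v) \<and>
                 (\<forall>u. u \<notin> H \<longrightarrow> \<phi> u = 0)}"

definition restr :: "('i \<Rightarrow> 'k) set \<Rightarrow> ('i::finite \<Rightarrow> 'k::field) \<Rightarrow> (('i \<Rightarrow> 'k) \<Rightarrow> 'k)" where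
  "restr H x = (\<lambda>\<eta>. if \<eta> \<in> H then pair x \<eta> else 0)"

definition St :: "(('i \<Rightarrow> 'k::field) \<Rightarrow> ('i \<Rightarrow> 'k) \<Rightarrow> ('i \<Rightarrow> 'k)) \<Rightarrow> ('i \<Rightarrow> 'k) set
                   \<Rightarrow> (('i \<Rightarrow> 'k) \<Rightarrow> 'k) \<Rightarrow> ('i \<Rightarrow> 'k) set" where
  "St br H h = {\<xi>. \<forall>\<eta>\<in>H. h (br \<xi> \<eta>) = 0}"

text \<open>Polynomial functions: the algebra generated by constants and a set G of
 linear functions (basis-free definition of polynomial functions on a vector space).\<close>
inductive_set polyalg :: "('a \<Rightarrow> 'k::comm_ring_1) set \<Rightarrow> ('a \<Rightarrow> 'k) set" for G where
  const: "(\<lambda>_. c) \<in> polyalg G"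
| gen: "g \<in> G \<Longrightarrow> g \<in> polyalg G"
| add: "p \<in> polyalg G \<Longrightarrow> q \<in> polyalg G \<Longrightarrow> (\<lambda>x. p x + q x) \<in> polyalg G"
| mult: "p \<in> polyalg G \<Longrightarrow> q \<in> polyalg G \<Longrightarrow> (\<lambda>x. p x * q x) \<in> polyalg G"

definition poly_on :: "('a \<Rightarrow> 'k::comm_ring_1) set \<Rightarrow> 'a set \<Rightarrow> ('a \<Rightarrow> 'k) \<Rightarrow> bool" where
  "poly_on G D f \<longleftrightarrow> (\<exists>p\<in>polyalg G. \<forall>x\<in>D. f x = p x)"

text \<open>S(g): polynomial functions on g*.\<close>
definition Sg :: "(('i::finite \<Rightarrow> 'k::field) \<Rightarrow> 'k) set" where
  "Sg = {f. poly_on {(\<lambda>x. pair x \<xi>) | \<xi>. True} UNIV f}"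

text \<open>Polynomial maps h* -> g: every coordinate is a polynomial function on h*,
 whose linear functions are the evaluations at elements of H.\<close>
definition poly_map_hdual :: "('i::finite \<Rightarrow> 'k::field) set \<Rightarrow> ((('i \<Rightarrow> 'k) \<Rightarrow> 'k) \<Rightarrow> ('i \<Rightarrow> 'k)) \<Rightarrow> bool" where
  "poly_map_hdual H \<Psi> \<longleftrightarrow> (\<forall>i. poly_on {(\<lambda>\<phi>. \<phi> \<eta>) | \<eta>. \<eta> \<in> H} (hdual H) (\<lambda>\<phi>. \<Psi> \<phi> i))"

definition dderiv :: "(('i \<Rightarrow> 'k::field) \<Rightarrow> 'k) \<Rightarrow> ('i \<Rightarrow> 'k) \<Rightarrow> ('i \<Rightarrow> 'k) \<Rightarrow> 'k" where
  "dderiv f x v = coeff (THE p. \<forall>t. poly p t = f (\<lambda>i. x i + t * v i)) 1"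

definition grad :: "(('i \<Rightarrow> 'k::field) \<Rightarrow> 'k) \<Rightarrow> ('i \<Rightarrow> 'k) \<Rightarrow> ('i \<Rightarrow> 'k)" where
  "grad f x = (\<lambda>i. dderiv f x (\<lambda>j. if j = i then 1 else 0))"

definition lie_poisson :: "(('i::finite \<Rightarrow> 'k::field) \<Rightarrow> ('i \<Rightarrow> 'k) \<Rightarrow> ('i \<Rightarrow> 'k))
     \<Rightarrow> (('i \<Rightarrow> 'k) \<Rightarrow> 'k) \<Rightarrow> (('i \<Rightarrow> 'k) \<Rightarrow> 'k) \<Rightarrow> (('i \<Rightarrow> 'k) \<Rightarrow> 'k)" where
  "lie_poisson br f g = (\<lambda>x. pair x (br (grad f x) (grad g x)))"

definition Ann :: "(('i::finite \<Rightarrow> 'k::field) \<Rightarrow> ('i \<Rightarrow> 'k) \<Rightarrow> ('i \<Rightarrow> 'k)) \<Rightarrow> ('i \<Rightarrow> 'k) set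
     \<Rightarrow> (('i \<Rightarrow> 'k) \<Rightarrow> 'k) set" where
  "Ann br H = {f \<in> Sg. \<forall>\<eta>\<in>H. lie_poisson br f (\<lambda>x. pair x \<eta>) = (\<lambda>_. 0)}"

definition admissible :: "(('i::finite \<Rightarrow> 'k::field) \<Rightarrow> ('i \<Rightarrow> 'k) \<Rightarrow> ('i \<Rightarrow> 'k)) \<Rightarrow> ('i \<Rightarrow> 'k) set
     \<Rightarrow> ((('i \<Rightarrow> 'k) \<Rightarrow> 'k) \<Rightarrow> ('i \<Rightarrow> 'k)) \<Rightarrow> bool" where
  "admissible br H \<Psi> \<longleftrightarrow> poly_map_hdual H \<Psi> \<and> (\<forall>h\<in>hdual H. \<Psi> h \<in> St br H h)"

definition fPsi :: "('i \<Rightarrow> 'k) set \<Rightarrow> ((('i \<Rightarrow> 'k) \<Rightarrow> 'k) \<Rightarrow> ('i \<Rightarrow> 'k)) \<Rightarrow> ('i::finite \<Rightarrow> 'k::field) \<Rightarrow> 'k" where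
  "fPsi H \<Psi> = (\<lambda>x. pair x (\<Psi> (restr H x)))"

definition map_bracket :: "(('i \<Rightarrow> 'k) \<Rightarrow> ('i \<Rightarrow> 'k) \<Rightarrow> ('i \<Rightarrow> 'k))
     \<Rightarrow> ('h \<Rightarrow> ('i \<Rightarrow> 'k)) \<Rightarrow> ('h \<Rightarrow> ('i \<Rightarrow> 'k)) \<Rightarrow> ('h \<Rightarrow> ('i \<Rightarrow> 'k))" where
  "map_bracket br \<Psi>1 \<Psi>2 = (\<lambda>h. br (\<Psi>1 h) (\<Psi>2 h))"

end

theory Submission
  imports Defs
begin


lemma dderiv_eq:
  fixes f :: "('i \<Rightarrow> 'k::field_char_0) \<Rightarrow> 'k"
  assumes "\<forall>t. poly q t = f (\<lambda>i. x i + t * v i)"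
  shows "dderiv f x v = coeff q 1"
proof -
  have "(THE p. \<forall>t. poly p t = f (\<lambda>i. x i + t * v i)) = q"
  proof (rule the_equality)
    fix p assume "\<forall>t. poly p t = f (\<lambda>i. x i + t * v i)"
    with assms have "poly p = poly q" by auto
    thus "p = q" by (simp add: poly_eq_poly_eq_iff)
  qed (use assms in auto)
  thus ?thesis unfolding dderiv_def by simp
qed

lemma coeff1_lin_mult: "coeff ([:a, b:] * q) 1 = a * coeff q 1 + b * coeff q 0"
  by (simp add: coeff_mult)

lemma coeff1_mult: "coeff (p * q) 1 = coeff p 0 * coeff q 1 + coeff p 1 * coeff q 0"
  by (simp add: coeff_mult)

lemma coeff0_poly: "coeff q 0 = poly q 0"
  by (simp add: poly_0_coeff_0)


lemma br_lin:
  assumes "lie_algebra br"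
  shows "br (\<lambda>i. x i + y i) z = (\<lambda>i. br x z i + br y z i)"
    and "br z (\<lambda>i. x i + y i) = (\<lambda>i. br z x i + br z y i)"
    and "br (\<lambda>i. a * x i) z = (\<lambda>i. a * br x z i)"
    and "br z (\<lambda>i. a * x i) = (\<lambda>i. a * br z x i)"
    and "br x x = (\<lambda>_. 0)"
proof -
  have L: "\<And>a b x y z. br (\<lambda>i. a * x i + b * y i) z = (\<lambda>i. a * br x z i + b * br y z i)"
   and R: "\<And>a b x y z. br z (\<lambda>i. a * x i + b * y i) = (\<lambda>i. a * br z x i + b * br z y i)"
   and Z: "\<And>x. br x x = (\<lambda>_. 0)"
    using assms unfolding lie_algebra_def by blast+
  show "br (\<lambda>i. x i + y i) z = (\<lambda>i. br x z i + br y z i)" using L[where a=1 and b=1 and x=x and y=y and z=z] by simp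
  show "br z (\<lambda>i. x i + y i) = (\<lambda>i. br z x i + br z y i)" using R[where a=1 and b=1 and x=x and y=y and z=z] by simp
  show "br (\<lambda>i. a * x i) z = (\<lambda>i. a * br x z i)" using L[where a=a and b=0 and x=x and y=x and z=z] by simp
  show "br z (\<lambda>i. a * x i) = (\<lambda>i. a * br z x i)" using R[where a=a and b=0 and x=x and y=x and z=z] by simp
  show "br x x = (\<lambda>_. 0)" by (rule Z)
qed

lemma br_antisym:
  assumes "lie_algebra br"
  shows "br y x = (\<lambda>i. - br x y i)"
proof -
  have "br (\<lambda>i. x i + y i) (\<lambda>i. x i + y i) = (\<lambda>_. 0)" using br_lin(5)[OF assms] .
  hence "(\<lambda>i. br x x i + br x y i + (br y x i + br y y i)) = (\<lambda>_. 0)"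
    by (simp add: br_lin(1,2)[OF assms])
  hence "(\<lambda>i. br x y i + br y x i) = (\<lambda>_. 0)" by (simp add: br_lin(5)[OF assms])
  thus ?thesis by (auto simp: fun_eq_iff add_eq_0_iff)
qed

lemma pair_simps:
  shows "pair (\<lambda>i. x i + y i) \<xi> = pair x \<xi> + pair y \<xi>"
    and "pair x (\<lambda>i. a i + b i) = pair x a + pair x b"
    and "pair x (\<lambda>i. c * a i) = c * pair x a"
    and "pair x (\<lambda>i. - a i) = - pair x a"
    and "pair x (\<lambda>_. 0) = 0"
    and "pair (\<lambda>i. t * v i) \<xi> = t * pair v \<xi>"
  unfolding pair_def
  by (auto simp: algebra_simps sum.distrib sum_distrib_left sum_negf)

lemma pair_e: "pair (\<lambda>j. if j = k then 1 else 0) \<xi> = \<xi> k"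
proof -
  have "pair (\<lambda>j. if j = k then 1 else 0) \<xi> = (\<Sum>i\<in>UNIV. if i = k then \<xi> i else 0)"
    unfolding pair_def by (rule sum.cong) auto
  thus ?thesis by simp
qed

lemma subspace_add: "subspace_of H \<Longrightarrow> u \<in> H \<Longrightarrow> v \<in> H \<Longrightarrow> (\<lambda>i. u i + v i) \<in> H"
  unfolding subspace_of_def by blast
lemma subspace_scale: "subspace_of H \<Longrightarrow> u \<in> H \<Longrightarrow> (\<lambda>i. a * u i) \<in> H"
  unfolding subspace_of_def by blast
lemma subspace_zero: "subspace_of H \<Longrightarrow> (\<lambda>i. 0) \<in> H"
  unfolding subspace_of_def by blast

lemma subspace_sum:
  assumes "subspace_of H" "finite A" "\<forall>j\<in>A. g j \<in> H"
  shows "(\<lambda>i. \<Sum>j\<in>A. c j * g j i) \<in> H"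
  using assms(2,3)
proof (induction A rule: finite_induct)
  case empty thus ?case using assms(1) unfolding subspace_of_def by simp
next
  case (insert a A)
  have "(\<lambda>i. c a * g a i) \<in> H" using subspace_scale[OF assms(1)] insert by blast
  hence "(\<lambda>i. c a * g a i + (\<Sum>j\<in>A. c j * g j i)) \<in> H"
    using subspace_add[OF assms(1), of "\<lambda>i. c a * g a i" "\<lambda>i. (\<Sum>j\<in>A. c j * g j i)"] insert by simp
  thus ?case using insert by simp
qed

lemma polyalg_line:
  fixes p :: "('i::finite \<Rightarrow> 'k::field_char_0) \<Rightarrow> 'k"
  assumes S: "subspace_of S"
    and "p \<in> polyalg {(\<lambda>x. pair x \<xi>) | \<xi>. \<xi> \<in> S}"
  shows "\<exists>\<gamma>\<in>S. \<forall>v. \<exists>q. (\<forall>t. poly q t = p (\<lambda>i. x i + t * v i)) \<and> coeff q 1 = pair v \<gamma>"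
  using assms(2)
proof (induction rule: polyalg.induct)
  case (const c)
  have "\<forall>v. (\<forall>t. poly [:c:] t = c) \<and> coeff [:c:] 1 = pair v (\<lambda>_. 0)"
    by (simp add: pair_simps)
  thus ?case using S unfolding subspace_of_def by blast
next
  case (gen g)
  then obtain \<xi> where g: "g = (\<lambda>x. pair x \<xi>)" "\<xi> \<in> S" by blast
  have "\<forall>v. (\<forall>t. poly [:pair x \<xi>, pair v \<xi>:] t = g (\<lambda>i. x i + t * v i)) \<and> coeff [:pair x \<xi>, pair v \<xi>:] 1 = pair v \<xi>"
    by (simp add: g pair_simps algebra_simps)
  thus ?case using g by blast
next
  case (add p q)
  from add.IH obtain \<gamma>1 \<gamma>2 where G: "\<gamma>1 \<in> S" "\<gamma>2 \<in> S"
    "\<forall>v. \<exists>q. (\<forall>t. poly q t = p (\<lambda>i. x i + t * v i)) \<and> coeff q 1 = pair v \<gamma>1"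
    "\<forall>v. \<exists>qa. (\<forall>t. poly qa t = q (\<lambda>i. x i + t * v i)) \<and> coeff qa 1 = pair v \<gamma>2" by blast
  have "\<forall>v. \<exists>r. (\<forall>t. poly r t = p (\<lambda>i. x i + t * v i) + q (\<lambda>i. x i + t * v i)) \<and> coeff r 1 = pair v (\<lambda>i. \<gamma>1 i + \<gamma>2 i)"
  proof
    fix v
    obtain q1 q2 where "\<forall>t. poly q1 t = p (\<lambda>i. x i + t * v i)" "coeff q1 1 = pair v \<gamma>1"
      "\<forall>t. poly q2 t = q (\<lambda>i. x i + t * v i)" "coeff q2 1 = pair v \<gamma>2" using G by meson
    thus "\<exists>r. (\<forall>t. poly r t = p (\<lambda>i. x i + t * v i) + q (\<lambda>i. x i + t * v i)) \<and> coeff r 1 = pair v (\<lambda>i. \<gamma>1 i + \<gamma>2 i)"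
      by (intro exI[of _ "q1 + q2"]) (simp add: pair_simps)
  qed
  moreover have "(\<lambda>i. \<gamma>1 i + \<gamma>2 i) \<in> S" using S G unfolding subspace_of_def by blast
  ultimately show ?case by blast
next
  case (mult p q)
  from mult.IH obtain \<gamma>1 \<gamma>2 where G: "\<gamma>1 \<in> S" "\<gamma>2 \<in> S"
    "\<forall>v. \<exists>q. (\<forall>t. poly q t = p (\<lambda>i. x i + t * v i)) \<and> coeff q 1 = pair v \<gamma>1"
    "\<forall>v. \<exists>qa. (\<forall>t. poly qa t = q (\<lambda>i. x i + t * v i)) \<and> coeff qa 1 = pair v \<gamma>2" by blast
  let ?g = "\<lambda>i. q x * \<gamma>1 i + p x * \<gamma>2 i"
  have "\<forall>v. \<exists>r. (\<forall>t. poly r t = p (\<lambda>i. x i + t * v i) * q (\<lambda>i. x i + t * v i)) \<and> coeff r 1 = pair v ?g"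
  proof
    fix v
    obtain q1 q2 where Q: "\<forall>t. poly q1 t = p (\<lambda>i. x i + t * v i)" "coeff q1 1 = pair v \<gamma>1"
      "\<forall>t. poly q2 t = q (\<lambda>i. x i + t * v i)" "coeff q2 1 = pair v \<gamma>2" using G by meson
    have c0: "coeff q1 0 = p x" "coeff q2 0 = q x"
      using Q(1)[rule_format, of 0] Q(3)[rule_format, of 0] by (simp_all add: coeff0_poly)
    have "coeff (q1 * q2) 1 = pair v ?g"
      unfolding coeff1_mult c0 Q by (simp add: pair_def sum_distrib_left sum.distrib algebra_simps)
    thus "\<exists>r. (\<forall>t. poly r t = p (\<lambda>i. x i + t * v i) * q (\<lambda>i. x i + t * v i)) \<and> coeff r 1 = pair v ?g"
      using Q by (intro exI[of _ "q1 * q2"]) simp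
  qed
  moreover have "?g \<in> S"
    using subspace_add[OF S subspace_scale[OF S G(1), of "q x"] subspace_scale[OF S G(2), of "p x"]] by simp
  ultimately show ?case by blast
qed


lemma polyalg_restr:
  "q \<in> polyalg {(\<lambda>\<phi>. \<phi> \<eta>) | \<eta>. \<eta> \<in> H} \<Longrightarrow> (\<lambda>x. q (restr H x)) \<in> polyalg {(\<lambda>x. pair x \<xi>) | \<xi>. \<xi> \<in> H}"
proof (induction rule: polyalg.induct)
  case (const c) thus ?case by (simp add: polyalg.const)
next
  case (gen g)
  then obtain \<eta> where "g = (\<lambda>\<phi>. \<phi> \<eta>)" "\<eta> \<in> H" by blast
  hence "(\<lambda>x. g (restr H x)) = (\<lambda>x. pair x \<eta>)" by (simp add: restr_def)
  thus ?case using \<open>\<eta> \<in> H\<close> by (auto intro: polyalg.gen)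
next
  case (add p q) thus ?case using polyalg.add by fastforce
next
  case (mult p q) thus ?case using polyalg.mult by fastforce
qed

lemma polyalg_mono: "p \<in> polyalg G \<Longrightarrow> G \<subseteq> G' \<Longrightarrow> p \<in> polyalg G'"
  by (induction rule: polyalg.induct) (auto intro: polyalg.intros)

lemma polyalg_sum: "finite A \<Longrightarrow> (\<forall>j\<in>A. g j \<in> polyalg G) \<Longrightarrow> (\<lambda>x. \<Sum>j\<in>A. g j x) \<in> polyalg G"
proof (induction A rule: finite_induct)
  case empty thus ?case by (simp add: polyalg.const)
next
  case (insert a A) thus ?case using polyalg.add[of "g a" G "\<lambda>x. \<Sum>j\<in>A. g j x"] by simp
qed

lemma restr_hdual:
  fixes H :: "('i::finite \<Rightarrow> 'k::field) set"
  assumes "subspace_of H" shows "restr H x \<in> hdual H"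
  unfolding hdual_def restr_def
proof (safe)
  fix u v a b assume "u \<in> H" "v \<in> H"
  hence "(\<lambda>i. a * u i + b * v i) \<in> H"
    using subspace_add[OF assms subspace_scale[OF assms, of u a] subspace_scale[OF assms, of v b]] by simp
  thus "(if (\<lambda>i. a * u i + b * v i) \<in> H then pair x (\<lambda>i. a * u i + b * v i) else 0) =
       a * (if u \<in> H then pair x u else 0) + b * (if v \<in> H then pair x v else 0)"
    using \<open>u \<in> H\<close> \<open>v \<in> H\<close> by (simp add: pair_simps)
qed auto



lemma grad_fPsi:
  fixes br :: "('i::finite \<Rightarrow> 'k::field_char_0) \<Rightarrow> ('i \<Rightarrow> 'k) \<Rightarrow> ('i \<Rightarrow> 'k)"
  assumes ci: "comm_ideal br H" and adm: "admissible br H \<Psi>"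
  shows "\<exists>\<zeta>\<in>H. grad (fPsi H \<Psi>) x = (\<lambda>i. \<Psi> (restr H x) i + \<zeta> i)"
proof -
  have S: "subspace_of H" using ci unfolding comm_ideal_def by blast
  from adm have "\<forall>j. \<exists>q\<in>polyalg {(\<lambda>\<phi>. \<phi> \<eta>) | \<eta>. \<eta> \<in> H}. \<forall>\<phi>\<in>hdual H. \<Psi> \<phi> j = q \<phi>"
    unfolding admissible_def poly_map_hdual_def poly_on_def by blast
  hence "\<forall>j. \<exists>q. q \<in> polyalg {(\<lambda>\<phi>. \<phi> \<eta>) | \<eta>. \<eta> \<in> H} \<and> (\<forall>\<phi>\<in>hdual H. \<Psi> \<phi> j = q \<phi>)"
    by blast
  from choice[OF this] obtain Q where "\<forall>j. Q j \<in> polyalg {(\<lambda>\<phi>. \<phi> \<eta>) | \<eta>. \<eta> \<in> H} \<and> (\<forall>\<phi>\<in>hdual H. \<Psi> \<phi> j = Q j \<phi>)"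
    by blast
  hence Q: "\<And>j. Q j \<in> polyalg {(\<lambda>\<phi>. \<phi> \<eta>) | \<eta>. \<eta> \<in> H}"
    "\<And>j \<phi>. \<phi> \<in> hdual H \<Longrightarrow> \<Psi> \<phi> j = Q j \<phi>" by blast+
  define P where "P j = (\<lambda>y. Q j (restr H y))" for j
  have Pp: "P j \<in> polyalg {(\<lambda>x. pair x \<xi>) | \<xi>. \<xi> \<in> H}" for j
    unfolding P_def by (rule polyalg_restr[OF Q(1)])
  have PPsi: "\<Psi> (restr H y) j = P j y" for y j
    unfolding P_def using Q(2) restr_hdual[OF S] by blast
  have f: "fPsi H \<Psi> y = (\<Sum>j\<in>UNIV. y j * P j y)" for y
    unfolding fPsi_def pair_def PPsi ..
  have "\<forall>j. \<exists>\<gamma>\<in>H. \<forall>v. \<exists>q. (\<forall>t. poly q t = P j (\<lambda>i. x i + t * v i)) \<and> coeff q 1 = pair v \<gamma>"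
    using polyalg_line[OF S Pp] by blast
  hence "\<forall>j. \<exists>\<gamma>. \<gamma> \<in> H \<and> (\<forall>v. \<exists>q. (\<forall>t. poly q t = P j (\<lambda>i. x i + t * v i)) \<and> coeff q 1 = pair v \<gamma>)"
    by blast
  from choice[OF this] obtain \<Gamma> where "\<forall>j. \<Gamma> j \<in> H \<and> (\<forall>v. \<exists>q. (\<forall>t. poly q t = P j (\<lambda>i. x i + t * v i)) \<and> coeff q 1 = pair v (\<Gamma> j))"
    by blast
  hence G: "\<And>j. \<Gamma> j \<in> H"
    "\<And>j v. \<exists>q. (\<forall>t. poly q t = P j (\<lambda>i. x i + t * v i)) \<and> coeff q 1 = pair v (\<Gamma> j)" by blast+
  define \<zeta> where "\<zeta> = (\<lambda>i. \<Sum>j\<in>UNIV. x j * \<Gamma> j i)"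
  have zH: "\<zeta> \<in> H" unfolding \<zeta>_def by (rule subspace_sum[OF S]) (auto simp: G)
  have "grad (fPsi H \<Psi>) x k = \<Psi> (restr H x) k + \<zeta> k" for k
  proof -
    define v :: "'i \<Rightarrow> 'k" where "v = (\<lambda>j. if j = k then 1 else 0)"
    have "\<forall>j. \<exists>q. (\<forall>t. poly q t = P j (\<lambda>i. x i + t * v i)) \<and> coeff q 1 = pair v (\<Gamma> j)"
      using G(2) by blast
    from choice[OF this] obtain Qv where "\<forall>j. (\<forall>t. poly (Qv j) t = P j (\<lambda>i. x i + t * v i)) \<and> coeff (Qv j) 1 = pair v (\<Gamma> j)"
      by blast
    hence Qv: "\<And>j t. poly (Qv j) t = P j (\<lambda>i. x i + t * v i)" "\<And>j. coeff (Qv j) 1 = pair v (\<Gamma> j)"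
      by blast+
    define R where "R = (\<Sum>j\<in>UNIV. [:x j, v j:] * Qv j)"
    have "\<forall>t. poly R t = fPsi H \<Psi> (\<lambda>i. x i + t * v i)"
      unfolding R_def f by (simp add: poly_sum Qv algebra_simps)
    hence "grad (fPsi H \<Psi>) x k = coeff R 1" unfolding grad_def v_def[symmetric] by (rule dderiv_eq)
    also have "\<dots> = (\<Sum>j\<in>UNIV. x j * pair v (\<Gamma> j) + v j * coeff (Qv j) 0)"
      unfolding R_def coeff_sum coeff1_lin_mult Qv ..
    also have "\<dots> = (\<Sum>j\<in>UNIV. x j * \<Gamma> j k + v j * P j x)"
      by (simp add: v_def pair_e coeff0_poly Qv)
    also have "\<dots> = \<zeta> k + (\<Sum>j\<in>UNIV. if j = k then P j x else 0)"
      unfolding \<zeta>_def sum.distrib v_def by (intro arg_cong2[where f="(+)"] refl sum.cong) auto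
    also have "\<dots> = \<zeta> k + P k x" by simp
    finally show ?thesis by (simp add: PPsi)
  qed
  thus ?thesis using zH by blast
qed


lemma grad_lin:
  fixes \<eta> :: "'i::finite \<Rightarrow> 'k::field_char_0"
  shows "grad (\<lambda>y. pair y \<eta>) x = \<eta>"
proof
  fix k
  define v :: "'i \<Rightarrow> 'k" where "v = (\<lambda>j. if j = k then 1 else 0)"
  have "\<forall>t. poly [:pair x \<eta>, pair v \<eta>:] t = pair (\<lambda>i. x i + t * v i) \<eta>"
    by (simp add: pair_simps algebra_simps)
  hence "grad (\<lambda>y. pair y \<eta>) x k = coeff [:pair x \<eta>, pair v \<eta>:] 1"
    unfolding grad_def v_def[symmetric] by (rule dderiv_eq)
  thus "grad (\<lambda>y. pair y \<eta>) x k = \<eta> k" by (simp add: v_def pair_e)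
qed

lemma fPsi_poly:
  fixes \<Psi> :: "(('i::finite \<Rightarrow> 'k::field) \<Rightarrow> 'k) \<Rightarrow> ('i \<Rightarrow> 'k)"
  assumes S: "subspace_of H" and pm: "poly_map_hdual H \<Psi>"
  shows "\<exists>P. (\<forall>j. P j \<in> polyalg {(\<lambda>x. pair x \<xi>) | \<xi>. \<xi> \<in> H}) \<and> (\<forall>y. fPsi H \<Psi> y = (\<Sum>j\<in>UNIV. y j * P j y))"
proof -
  from pm have "\<forall>j. \<exists>q\<in>polyalg {(\<lambda>\<phi>. \<phi> \<eta>) | \<eta>. \<eta> \<in> H}. \<forall>\<phi>\<in>hdual H. \<Psi> \<phi> j = q \<phi>"
    unfolding poly_map_hdual_def poly_on_def by blast
  hence "\<forall>j. \<exists>q. q \<in> polyalg {(\<lambda>\<phi>. \<phi> \<eta>) | \<eta>. \<eta> \<in> H} \<and> (\<forall>\<phi>\<in>hdual H. \<Psi> \<phi> j = q \<phi>)"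
    by blast
  from choice[OF this] obtain Q where "\<forall>j. Q j \<in> polyalg {(\<lambda>\<phi>. \<phi> \<eta>) | \<eta>. \<eta> \<in> H} \<and> (\<forall>\<phi>\<in>hdual H. \<Psi> \<phi> j = Q j \<phi>)"
    by blast
  hence Q: "\<And>j. Q j \<in> polyalg {(\<lambda>\<phi>. \<phi> \<eta>) | \<eta>. \<eta> \<in> H}"
    "\<And>j \<phi>. \<phi> \<in> hdual H \<Longrightarrow> \<Psi> \<phi> j = Q j \<phi>" by blast+
  define P where "P j = (\<lambda>y. Q j (restr H y))" for j
  have Pp: "P j \<in> polyalg {(\<lambda>x. pair x \<xi>) | \<xi>. \<xi> \<in> H}" for j
    unfolding P_def by (rule polyalg_restr[OF Q(1)])
  have PPsi: "\<Psi> (restr H y) j = P j y" for y j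
    unfolding P_def using Q(2) restr_hdual[OF S] by blast
  have f: "fPsi H \<Psi> y = (\<Sum>j\<in>UNIV. y j * P j y)" for y
    unfolding fPsi_def pair_def PPsi ..
  show ?thesis using Pp f by blast
qed

lemma pair_e2: "pair y (\<lambda>i. if i = j then 1 else 0) = y j"
proof -
  have "pair y (\<lambda>i. if i = j then 1 else 0) = (\<Sum>i\<in>UNIV. if i = j then y i else 0)"
    unfolding pair_def by (rule sum.cong) auto
  thus ?thesis by simp
qed

lemma fPsi_Sg:
  fixes \<Psi> :: "(('i::finite \<Rightarrow> 'k::field) \<Rightarrow> 'k) \<Rightarrow> ('i \<Rightarrow> 'k)"
  assumes S: "subspace_of H" and pm: "poly_map_hdual H \<Psi>"
  shows "fPsi H \<Psi> \<in> Sg"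
proof -
  obtain P where P: "\<And>j. P j \<in> polyalg {(\<lambda>x. pair x \<xi>) | \<xi>. \<xi> \<in> H}"
    "\<And>y. fPsi H \<Psi> y = (\<Sum>j\<in>UNIV. y j * P j y)"
    using fPsi_poly[OF S pm] by blast
  let ?G = "{(\<lambda>x. pair x \<xi>) | (\<xi>::'i \<Rightarrow> 'k). True}"
  have "(\<lambda>y. y j * P j y) \<in> polyalg ?G" for j
  proof -
    have eq: "(\<lambda>y. pair y (\<lambda>i. if i = j then 1 else 0)) = (\<lambda>y. y j)"
      by (simp add: pair_e2)
    have "(\<lambda>y. pair y (\<lambda>i. if i = j then 1 else 0)) \<in> polyalg ?G" by (rule polyalg.gen) blast
    hence "(\<lambda>y. y j) \<in> polyalg ?G" unfolding eq .
    moreover have "P j \<in> polyalg ?G" by (rule polyalg_mono[OF P(1)]) blast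
    ultimately show ?thesis using polyalg.mult by fastforce
  qed
  hence "(\<lambda>y. \<Sum>j\<in>UNIV. y j * P j y) \<in> polyalg ?G" by (intro polyalg_sum) auto
  thus ?thesis unfolding Sg_def poly_on_def using P(2) by auto
qed



lemma hdual_lin: "h \<in> hdual H \<Longrightarrow> u \<in> H \<Longrightarrow> v \<in> H \<Longrightarrow> h (\<lambda>i. a * u i + b * v i) = a * h u + b * h v"
  unfolding hdual_def by blast

lemma ideal_mem: "comm_ideal br H \<Longrightarrow> \<eta> \<in> H \<Longrightarrow> br \<xi> \<eta> \<in> H"
  unfolding comm_ideal_def by blast

lemma comm_zero: "comm_ideal br H \<Longrightarrow> \<eta>1 \<in> H \<Longrightarrow> \<eta>2 \<in> H \<Longrightarrow> br \<eta>1 \<eta>2 = (\<lambda>_. 0)"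
  unfolding comm_ideal_def by blast

lemma pz:
  assumes ci: "comm_ideal br H" and "\<psi> \<in> St br H (restr H x)" "\<zeta> \<in> H"
  shows "pair x (br \<psi> \<zeta>) = 0"
proof -
  have "br \<psi> \<zeta> \<in> H" using ideal_mem[OF ci assms(3)] .
  moreover have "restr H x (br \<psi> \<zeta>) = 0" using assms(2,3) unfolding St_def by blast
  ultimately show ?thesis unfolding restr_def by simp
qed

lemma pz':
  assumes la: "lie_algebra br" and ci: "comm_ideal br H" and "\<psi> \<in> St br H (restr H x)" "\<zeta> \<in> H"
  shows "pair x (br \<zeta> \<psi>) = 0"
  using pz[OF ci assms(3,4)] by (simp add: br_antisym[OF la, of \<zeta> \<psi>] pair_simps)

lemma poisson_key:
  assumes la: "lie_algebra br" and ci: "comm_ideal br H"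
    and "\<psi>1 \<in> St br H (restr H x)" "\<psi>2 \<in> St br H (restr H x)" "\<zeta>1 \<in> H" "\<zeta>2 \<in> H"
  shows "pair x (br (\<lambda>i. \<psi>1 i + \<zeta>1 i) (\<lambda>i. \<psi>2 i + \<zeta>2 i)) = pair x (br \<psi>1 \<psi>2)"
proof -
  have "br (\<lambda>i. \<psi>1 i + \<zeta>1 i) (\<lambda>i. \<psi>2 i + \<zeta>2 i) =
     (\<lambda>i. (br \<psi>1 \<psi>2 i + br \<psi>1 \<zeta>2 i) + (br \<zeta>1 \<psi>2 i + br \<zeta>1 \<zeta>2 i))"
    by (simp add: br_lin(1,2)[OF la])
  hence "pair x (br (\<lambda>i. \<psi>1 i + \<zeta>1 i) (\<lambda>i. \<psi>2 i + \<zeta>2 i)) =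
     (pair x (br \<psi>1 \<psi>2) + pair x (br \<psi>1 \<zeta>2)) + (pair x (br \<zeta>1 \<psi>2) + pair x (br \<zeta>1 \<zeta>2))"
    by (simp add: pair_simps)
  also have "\<dots> = pair x (br \<psi>1 \<psi>2)"
    using pz[OF ci assms(3,6)] pz'[OF la ci assms(4,5)] comm_zero[OF ci assms(5,6)]
    by (simp add: pair_simps)
  finally show ?thesis .
qed

lemma adm_St:
  assumes "comm_ideal br H" "admissible br H \<Psi>"
  shows "\<Psi> (restr H x) \<in> St br H (restr H x)"
  using assms restr_hdual[of H x] unfolding admissible_def comm_ideal_def by blast

lemma poisson_fPsi:
  fixes br :: "('i::finite \<Rightarrow> 'k::field_char_0) \<Rightarrow> ('i \<Rightarrow> 'k) \<Rightarrow> ('i \<Rightarrow> 'k)"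
  assumes la: "lie_algebra br" and ci: "comm_ideal br H"
    and a1: "admissible br H \<Psi>1" and a2: "admissible br H \<Psi>2"
  shows "lie_poisson br (fPsi H \<Psi>1) (fPsi H \<Psi>2) = fPsi H (map_bracket br \<Psi>1 \<Psi>2)"
proof
  fix x
  obtain \<zeta>1 where z1: "\<zeta>1 \<in> H" "grad (fPsi H \<Psi>1) x = (\<lambda>i. \<Psi>1 (restr H x) i + \<zeta>1 i)"
    using grad_fPsi[OF ci a1] by blast
  obtain \<zeta>2 where z2: "\<zeta>2 \<in> H" "grad (fPsi H \<Psi>2) x = (\<lambda>i. \<Psi>2 (restr H x) i + \<zeta>2 i)"
    using grad_fPsi[OF ci a2] by blast
  show "lie_poisson br (fPsi H \<Psi>1) (fPsi H \<Psi>2) x = fPsi H (map_bracket br \<Psi>1 \<Psi>2) x"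
    unfolding lie_poisson_def z1(2) z2(2) unfolding fPsi_def map_bracket_def
    by (rule poisson_key[OF la ci adm_St[OF ci a1] adm_St[OF ci a2] z1(1) z2(1)])
qed

lemma fPsi_Ann:
  fixes br :: "('i::finite \<Rightarrow> 'k::field_char_0) \<Rightarrow> ('i \<Rightarrow> 'k) \<Rightarrow> ('i \<Rightarrow> 'k)"
  assumes la: "lie_algebra br" and ci: "comm_ideal br H"
    and a: "admissible br H \<Psi>"
  shows "fPsi H \<Psi> \<in> Ann br H"
proof -
  have S: "subspace_of H" using ci unfolding comm_ideal_def by blast
  have "fPsi H \<Psi> \<in> Sg" using fPsi_Sg[OF S] a unfolding admissible_def by blast
  moreover have "lie_poisson br (fPsi H \<Psi>) (\<lambda>x. pair x \<eta>) = (\<lambda>_. 0)" if "\<eta> \<in> H" for \<eta>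
  proof
    fix x
    obtain \<zeta> where z: "\<zeta> \<in> H" "grad (fPsi H \<Psi>) x = (\<lambda>i. \<Psi> (restr H x) i + \<zeta> i)"
      using grad_fPsi[OF ci a] by blast
    have "pair x (br (\<lambda>i. \<Psi> (restr H x) i + \<zeta> i) \<eta>) = pair x (br (\<Psi> (restr H x)) \<eta>) + pair x (br \<zeta> \<eta>)"
      by (simp add: br_lin(1)[OF la] pair_simps)
    also have "\<dots> = 0" using pz[OF ci adm_St[OF ci a] that] comm_zero[OF ci z(1) that]
      by (simp add: pair_simps)
    finally show "lie_poisson br (fPsi H \<Psi>) (\<lambda>x. pair x \<eta>) x = 0"
      unfolding lie_poisson_def grad_lin z(2) .
  qed
  ultimately show ?thesis unfolding Ann_def by blast
qed



lemma poly_on_add: "poly_on G D f \<Longrightarrow> poly_on G D g \<Longrightarrow> poly_on G D (\<lambda>x. f x + g x)"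
proof -
  assume "poly_on G D f" "poly_on G D g"
  then obtain p q where "p \<in> polyalg G" "q \<in> polyalg G" "\<forall>x\<in>D. f x = p x" "\<forall>x\<in>D. g x = q x"
    unfolding poly_on_def by blast
  thus ?thesis unfolding poly_on_def by (intro bexI[where x="\<lambda>x. p x + q x"] polyalg.add) auto
qed

lemma poly_on_mult: "poly_on G D f \<Longrightarrow> poly_on G D g \<Longrightarrow> poly_on G D (\<lambda>x. f x * g x)"
proof -
  assume "poly_on G D f" "poly_on G D g"
  then obtain p q where "p \<in> polyalg G" "q \<in> polyalg G" "\<forall>x\<in>D. f x = p x" "\<forall>x\<in>D. g x = q x"
    unfolding poly_on_def by blast
  thus ?thesis unfolding poly_on_def by (intro bexI[where x="\<lambda>x. p x * q x"] polyalg.mult) auto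
qed

lemma poly_on_const: "poly_on G D (\<lambda>_. c)"
  unfolding poly_on_def by (auto intro!: bexI[OF _ polyalg.const])

lemma poly_on_sum: "finite A \<Longrightarrow> (\<forall>j\<in>A. poly_on G D (g j)) \<Longrightarrow> poly_on G D (\<lambda>x. \<Sum>j\<in>A. g j x)"
proof (induction A rule: finite_induct)
  case empty thus ?case using poly_on_const[of G D 0] by simp
next
  case (insert a A) thus ?case using poly_on_add[of G D "g a" "\<lambda>x. \<Sum>j\<in>A. g j x"] by simp
qed

lemma br_sum_left:
  assumes la: "lie_algebra br" and "finite A"
  shows "br (\<lambda>i. \<Sum>j\<in>A. c j * e j i) z = (\<lambda>i. \<Sum>j\<in>A. c j * br (e j) z i)"
  using assms(2)
proof (induction A rule: finite_induct)
  case empty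
  have "br (\<lambda>i. 0 * z i) z = (\<lambda>i. 0 * br z z i)" by (rule br_lin(3)[OF la])
  thus ?case by simp
next
  case (insert a A)
  have "br (\<lambda>i. c a * e a i + (\<Sum>j\<in>A. c j * e j i)) z
      = (\<lambda>i. br (\<lambda>i. c a * e a i) z i + br (\<lambda>i. \<Sum>j\<in>A. c j * e j i) z i)"
    by (rule br_lin(1)[OF la])
  also have "\<dots> = (\<lambda>i. c a * br (e a) z i + (\<Sum>j\<in>A. c j * br (e j) z i))"
    by (simp add: br_lin(3)[OF la] insert.IH)
  finally show ?case using insert by simp
qed

lemma br_sum_right:
  assumes la: "lie_algebra br" and "finite A"
  shows "br z (\<lambda>i. \<Sum>j\<in>A. c j * e j i) = (\<lambda>i. \<Sum>j\<in>A. c j * br z (e j) i)"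
  using assms(2)
proof (induction A rule: finite_induct)
  case empty
  have "br z (\<lambda>i. 0 * z i) = (\<lambda>i. 0 * br z z i)" by (rule br_lin(4)[OF la])
  thus ?case by simp
next
  case (insert a A)
  have "br z (\<lambda>i. c a * e a i + (\<Sum>j\<in>A. c j * e j i))
      = (\<lambda>i. br z (\<lambda>i. c a * e a i) i + br z (\<lambda>i. \<Sum>j\<in>A. c j * e j i) i)"
    by (rule br_lin(2)[OF la])
  also have "\<dots> = (\<lambda>i. c a * br z (e a) i + (\<Sum>j\<in>A. c j * br z (e j) i))"
    by (simp add: br_lin(4)[OF la] insert.IH)
  finally show ?case using insert by simp
qed

lemma vec_expand: "(u :: 'i::finite \<Rightarrow> 'k::comm_ring_1) = (\<lambda>i. \<Sum>j\<in>UNIV. u j * (\<lambda>i. if i = j then 1 else 0) i)"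
proof
  fix i
  have "(\<Sum>j\<in>UNIV. u j * (if i = j then 1 else 0)) = (\<Sum>j\<in>UNIV. if j = i then u j else 0)"
    by (rule sum.cong) auto
  thus "u i = (\<Sum>j\<in>UNIV. u j * (\<lambda>i. if i = j then 1 else 0) i)" by simp
qed

lemma br_expand:
  fixes br :: "('i::finite \<Rightarrow> 'k::field) \<Rightarrow> ('i \<Rightarrow> 'k) \<Rightarrow> ('i \<Rightarrow> 'k)"
  assumes la: "lie_algebra br"
  shows "br u w i = (\<Sum>j\<in>UNIV. u j * (\<Sum>k\<in>UNIV. w k * br (\<lambda>i. if i = j then 1 else 0) (\<lambda>i. if i = k then 1 else 0) i))"
proof -
  let ?e = "\<lambda>j i. if i = j then (1::'k) else 0"
  have "br u w = br (\<lambda>i. \<Sum>j\<in>UNIV. u j * ?e j i) w" by (subst vec_expand[of u]) (rule refl)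
  also have "\<dots> = (\<lambda>i. \<Sum>j\<in>UNIV. u j * br (?e j) w i)" by (rule br_sum_left[OF la]) simp
  finally have 1: "br u w i = (\<Sum>j\<in>UNIV. u j * br (?e j) w i)" by simp
  have "br (?e j) w = br (?e j) (\<lambda>i. \<Sum>k\<in>UNIV. w k * ?e k i)" for j by (subst vec_expand[of w]) (rule refl)
  also have "\<dots> j = (\<lambda>i. \<Sum>k\<in>UNIV. w k * br (?e j) (?e k) i)" for j by (rule br_sum_right[OF la]) simp
  finally have 2: "br (?e j) w i = (\<Sum>k\<in>UNIV. w k * br (?e j) (?e k) i)" for j by simp
  show ?thesis unfolding 1 2 ..
qed


lemma St_bracket:
  assumes la: "lie_algebra br" and ci: "comm_ideal br H" and h: "h \<in> hdual H"
    and s1: "\<xi>1 \<in> St br H h" and s2: "\<xi>2 \<in> St br H h"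
  shows "br \<xi>1 \<xi>2 \<in> St br H h"
  unfolding St_def
proof safe
  fix \<eta> assume eta: "\<eta> \<in> H"
  have J: "(\<lambda>i. br \<xi>1 (br \<xi>2 \<eta>) i + br \<xi>2 (br \<eta> \<xi>1) i + br \<eta> (br \<xi>1 \<xi>2) i) = (\<lambda>_. 0)"
  proof -
    from la[unfolded lie_algebra_def] have "\<forall>x y z. (\<lambda>i. br x (br y z) i + br y (br z x) i + br z (br x y) i) = (\<lambda>_. 0)"
      by (elim conjE) assumption
    thus ?thesis by blast
  qed
  have a1: "br \<eta> \<xi>1 = (\<lambda>i. (-1) * br \<xi>1 \<eta> i)" using br_antisym[OF la, of \<xi>1 \<eta>] by simp
  have a2: "br \<eta> (br \<xi>1 \<xi>2) = (\<lambda>i. - br (br \<xi>1 \<xi>2) \<eta> i)" by (rule br_antisym[OF la])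
  from J have K: "(\<lambda>i. br \<xi>1 (br \<xi>2 \<eta>) i + (-1) * br \<xi>2 (br \<xi>1 \<eta>) i - br (br \<xi>1 \<xi>2) \<eta> i) = (\<lambda>_. 0)"
    unfolding a1 a2 br_lin(4)[OF la] by simp
  have eq: "br (br \<xi>1 \<xi>2) \<eta> = (\<lambda>i. 1 * br \<xi>1 (br \<xi>2 \<eta>) i + (-1) * br \<xi>2 (br \<xi>1 \<eta>) i)"
  proof (rule ext)
    fix i
    from fun_cong[OF K, of i] show "br (br \<xi>1 \<xi>2) \<eta> i = 1 * br \<xi>1 (br \<xi>2 \<eta>) i + (-1) * br \<xi>2 (br \<xi>1 \<eta>) i"
      by (simp add: diff_eq_eq)
  qed
  have H1: "br \<xi>2 \<eta> \<in> H" "br \<xi>1 \<eta> \<in> H" using ideal_mem[OF ci eta] by blast+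
  have H2: "br \<xi>1 (br \<xi>2 \<eta>) \<in> H" "br \<xi>2 (br \<xi>1 \<eta>) \<in> H" using ideal_mem[OF ci] H1 by blast+
  have z: "h (br \<xi>1 (br \<xi>2 \<eta>)) = 0" "h (br \<xi>2 (br \<xi>1 \<eta>)) = 0"
    using s1 s2 H1 unfolding St_def by blast+
  show "h (br (br \<xi>1 \<xi>2) \<eta>) = 0"
    unfolding eq hdual_lin[OF h H2] z by simp
qed

lemma St_add:
  assumes la: "lie_algebra br" and ci: "comm_ideal br H" and h: "h \<in> hdual H"
    and s1: "\<xi>1 \<in> St br H h" and s2: "\<xi>2 \<in> St br H h"
  shows "(\<lambda>i. \<xi>1 i + \<xi>2 i) \<in> St br H h"
  unfolding St_def
proof safe
  fix \<eta> assume eta: "\<eta> \<in> H"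
  have eq: "br (\<lambda>i. \<xi>1 i + \<xi>2 i) \<eta> = (\<lambda>i. 1 * br \<xi>1 \<eta> i + 1 * br \<xi>2 \<eta> i)"
    by (simp add: br_lin(1)[OF la])
  have H1: "br \<xi>1 \<eta> \<in> H" "br \<xi>2 \<eta> \<in> H" using ideal_mem[OF ci eta] by blast+
  have z: "h (br \<xi>1 \<eta>) = 0" "h (br \<xi>2 \<eta>) = 0" using s1 s2 eta unfolding St_def by blast+
  show "h (br (\<lambda>i. \<xi>1 i + \<xi>2 i) \<eta>) = 0" unfolding eq hdual_lin[OF h H1] z by simp
qed

lemma St_scale:
  assumes la: "lie_algebra br" and ci: "comm_ideal br H" and h: "h \<in> hdual H"
    and s1: "\<xi>1 \<in> St br H h"
  shows "(\<lambda>i. a * \<xi>1 i) \<in> St br H h"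
  unfolding St_def
proof safe
  fix \<eta> assume eta: "\<eta> \<in> H"
  have eq: "br (\<lambda>i. a * \<xi>1 i) \<eta> = (\<lambda>i. a * br \<xi>1 \<eta> i + 0 * br \<xi>1 \<eta> i)"
    by (simp add: br_lin(3)[OF la])
  have H1: "br \<xi>1 \<eta> \<in> H" using ideal_mem[OF ci eta] by blast
  have z: "h (br \<xi>1 \<eta>) = 0" using s1 eta unfolding St_def by blast
  show "h (br (\<lambda>i. a * \<xi>1 i) \<eta>) = 0" unfolding eq hdual_lin[OF h H1 H1] z by simp
qed



theorem lemma3:
  fixes br :: "('i::finite \<Rightarrow> 'k::field_char_0) \<Rightarrow> ('i \<Rightarrow> 'k) \<Rightarrow> ('i \<Rightarrow> 'k)"
    and H :: "('i \<Rightarrow> 'k) set"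
  assumes "lie_algebra br"
    and "comm_ideal br H"
  shows "(\<forall>\<Psi>. admissible br H \<Psi> \<longrightarrow> fPsi H \<Psi> \<in> Ann br H)
       \<and> (\<forall>\<Psi>1 \<Psi>2. admissible br H \<Psi>1 \<longrightarrow> admissible br H \<Psi>2 \<longrightarrow>
             admissible br H (\<lambda>h. \<lambda>i. \<Psi>1 h i + \<Psi>2 h i)
           \<and> (\<forall>a. admissible br H (\<lambda>h. \<lambda>i. a * \<Psi>1 h i))
           \<and> admissible br H (map_bracket br \<Psi>1 \<Psi>2)
           \<and> lie_poisson br (fPsi H \<Psi>1) (fPsi H \<Psi>2) = fPsi H (map_bracket br \<Psi>1 \<Psi>2))"
proof (intro conjI allI impI)
  note la = assms(1) and ci = assms(2)
  fix \<Psi> assume "admissible br H \<Psi>"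
  thus "fPsi H \<Psi> \<in> Ann br H" by (rule fPsi_Ann[OF la ci])
next
  note la = assms(1) and ci = assms(2)
  fix \<Psi>1 \<Psi>2 assume a1: "admissible br H \<Psi>1" and a2: "admissible br H \<Psi>2"
  let ?G = "{(\<lambda>\<phi>. \<phi> \<eta>) | \<eta>. \<eta> \<in> H}"
  have p1: "\<And>i. poly_on ?G (hdual H) (\<lambda>\<phi>. \<Psi>1 \<phi> i)" and p2: "\<And>i. poly_on ?G (hdual H) (\<lambda>\<phi>. \<Psi>2 \<phi> i)"
    using a1 a2 unfolding admissible_def poly_map_hdual_def by blast+
  have s1: "\<And>h. h \<in> hdual H \<Longrightarrow> \<Psi>1 h \<in> St br H h" and s2: "\<And>h. h \<in> hdual H \<Longrightarrow> \<Psi>2 h \<in> St br H h"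
    using a1 a2 unfolding admissible_def by blast+
  show "admissible br H (\<lambda>h i. \<Psi>1 h i + \<Psi>2 h i)"
    unfolding admissible_def poly_map_hdual_def
  proof (intro conjI allI ballI)
    fix i show "poly_on ?G (hdual H) (\<lambda>\<phi>. \<Psi>1 \<phi> i + \<Psi>2 \<phi> i)" by (rule poly_on_add[OF p1 p2])
  next
    fix h assume "h \<in> hdual H"
    thus "(\<lambda>i. \<Psi>1 h i + \<Psi>2 h i) \<in> St br H h" by (intro St_add[OF la ci _ s1 s2])
  qed
  show "admissible br H (\<lambda>h i. a * \<Psi>1 h i)" for a
    unfolding admissible_def poly_map_hdual_def
  proof (intro conjI allI ballI)
    fix i show "poly_on ?G (hdual H) (\<lambda>\<phi>. a * \<Psi>1 \<phi> i)" by (rule poly_on_mult[OF poly_on_const p1])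
  next
    fix h assume "h \<in> hdual H"
    thus "(\<lambda>i. a * \<Psi>1 h i) \<in> St br H h" by (intro St_scale[OF la ci _ s1])
  qed
  show "admissible br H (map_bracket br \<Psi>1 \<Psi>2)"
    unfolding admissible_def poly_map_hdual_def
  proof (intro conjI allI ballI)
    fix i
    let ?c = "\<lambda>j k. br (\<lambda>i. if i = j then 1 else 0) (\<lambda>i. if i = k then 1 else 0) i"
    have "poly_on ?G (hdual H) (\<lambda>\<phi>. \<Sum>j\<in>UNIV. \<Psi>1 \<phi> j * (\<Sum>k\<in>UNIV. \<Psi>2 \<phi> k * ?c j k))"
    proof (rule poly_on_sum[OF finite_UNIV], rule ballI)
      fix j
      have "poly_on ?G (hdual H) (\<lambda>\<phi>. \<Sum>k\<in>UNIV. \<Psi>2 \<phi> k * ?c j k)"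
      proof (rule poly_on_sum[OF finite_UNIV], rule ballI)
        fix k
        show "poly_on ?G (hdual H) (\<lambda>\<phi>. \<Psi>2 \<phi> k * ?c j k)"
          by (rule poly_on_mult[OF p2 poly_on_const])
      qed
      thus "poly_on ?G (hdual H) (\<lambda>\<phi>. \<Psi>1 \<phi> j * (\<Sum>k\<in>UNIV. \<Psi>2 \<phi> k * ?c j k))"
        by (rule poly_on_mult[OF p1])
    qed
    thus "poly_on ?G (hdual H) (\<lambda>\<phi>. map_bracket br \<Psi>1 \<Psi>2 \<phi> i)"
    proof -
      have "(\<lambda>\<phi>. map_bracket br \<Psi>1 \<Psi>2 \<phi> i) = (\<lambda>\<phi>. \<Sum>j\<in>UNIV. \<Psi>1 \<phi> j * (\<Sum>k\<in>UNIV. \<Psi>2 \<phi> k * ?c j k))"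
        unfolding map_bracket_def by (rule ext, rule br_expand[OF la])
      thus ?thesis using \<open>poly_on ?G (hdual H) (\<lambda>\<phi>. \<Sum>j\<in>UNIV. \<Psi>1 \<phi> j * (\<Sum>k\<in>UNIV. \<Psi>2 \<phi> k * ?c j k))\<close> by simp
    qed
  next
    fix h assume "h \<in> hdual H"
    thus "map_bracket br \<Psi>1 \<Psi>2 h \<in> St br H h"
      unfolding map_bracket_def by (intro St_bracket[OF la ci] s1 s2)
  qed
  show "lie_poisson br (fPsi H \<Psi>1) (fPsi H \<Psi>2) = fPsi H (map_bracket br \<Psi>1 \<Psi>2)"
    by (rule poisson_fPsi[OF la ci a1 a2])
qed

end
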